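(* Let $q=12n+1$ be a prime power and let $C^6$ be the subgroup of index $6$ of the multiplicative group $\mathbb{F}_q^*$. Assume there is a $16$-tuple $(a_1,\dots,a_{16})$ of elements of $\mathbb{F}_q^*$ such that: (i) each of the four lists $\Delta_{0,0}=(a_1-a_2,\ a_5-a_6,\ a_{10}-a_{11},\ a_{10}-a_{12},\ a_{11}-a_{12},\ a_{15}-a_{16})$, $\Delta_{0,1}=(a_1-a_3,\ a_2-a_3,\ a_5-a_7,\ a_6-a_7,\ a_{14}-a_{15},\ a_{14}-a_{16})$, $\Delta_{1,0}=(a_1-a_4,\ a_2-a_4,\ a_5-a_8,\ a_6-a_8,\ a_{13}-a_{15},\ a_{13}-a_{16})$, $\Delta_{1,1}=(a_3-a_4,\ a_7-a_8,\ a_9-a_{10},\ a_9-a_{11},\ a_9-a_{12},\ a_{13}-a_{14})$ is a complete system of representatives for the cosets of $C^6$ in $\mathbb{F}_q^*$ (i.e. its six entries lie in six distinct cosets); and (ii) each of the four lists $U_{0,0}=(a_1,a_2,a_5,a_6,a_9)$, $U_{0,1}=(a_3,a_7,a_{13})$, $U_{1,0}=(a_4,a_8,a_{14})$, $U_{1,1}=(a_{10},a_{11},a_{12},a_{15},a_{16})$ is a partial system of representatives for the cosets of $C^6$ in $\mathbb{F}_q^*$ distinct from $C^6$ (i.e. its entries lie in pairwise distinct cosets, none of which is $C^6$). Then there exists a nested $(4q,4,1)$-BIBD.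
   Context: A $(v,k,\lambda)$-BIBD is a set $X$ of $v$ points with a multiset $\mathcal{A}$ of $k$-subsets such that every pair of distinct points lies in exactly $\lambda$ blocks (partial: at most $\lambda$). A $(v,4,1)$-BIBD is nested if there is a map $\phi:\mathcal{A}\to X$ such that $\{A\cup\{\phi(A)\}:A\in\mathcal{A}\}$ is the block multiset of a partial $(v,5,2)$-BIBD on $X$ (in particular $\phi(A)\notin A$). *)

theory Defs
  imports Main "HOL-Library.Multiset" "HOL-Library.Cardinality"
begin

definition pair_count :: "'p set multiset \<Rightarrow> 'p \<Rightarrow> 'p \<Rightarrow> nat" where
  "pair_count B x y = size (filter_mset (\<lambda>A. x \<in> A \<and> y \<in> A) B)"

definition partial_bibd :: "'p set \<Rightarrow> 'p set multiset \<Rightarrow> nat \<Rightarrow> nat \<Rightarrow> nat \<Rightarrow> bool" where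
  "partial_bibd X B v k lam \<longleftrightarrow> finite X \<and> card X = v \<and>
     (\<forall>A \<in># B. A \<subseteq> X \<and> card A = k) \<and>
     (\<forall>x\<in>X. \<forall>y\<in>X. x \<noteq> y \<longrightarrow> pair_count B x y \<le> lam)"

definition bibd :: "'p set \<Rightarrow> 'p set multiset \<Rightarrow> nat \<Rightarrow> nat \<Rightarrow> nat \<Rightarrow> bool" where
  "bibd X B v k lam \<longleftrightarrow> finite X \<and> card X = v \<and>
     (\<forall>A \<in># B. A \<subseteq> X \<and> card A = k) \<and>
     (\<forall>x\<in>X. \<forall>y\<in>X. x \<noteq> y \<longrightarrow> pair_count B x y = lam)"

definition nested_bibd :: "'p set \<Rightarrow> 'p set multiset \<Rightarrow> nat \<Rightarrow> bool" where
  "nested_bibd X B v \<longleftrightarrow> bibd X B v 4 1 \<and>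
     (\<exists>\<phi>. (\<forall>A \<in># B. \<phi> A \<in> X \<and> \<phi> A \<notin> A) \<and>
          partial_bibd X (image_mset (\<lambda>A. insert (\<phi> A) A) B) v 5 2)"

text \<open>The subgroup of index 6 of the multiplicative group of a finite field
  with q = 1 mod 6 (cyclic group): the nonzero sixth powers.\<close>

definition C6 :: "'a::{finite,field} set" where
  "C6 = {x. \<exists>y. y \<noteq> 0 \<and> x = y ^ 6}"

definition coset6 :: "'a::{finite,field} \<Rightarrow> 'a set" where
  "coset6 x = (\<lambda>c. x * c) ` C6"

definition complete_rep6 :: "'a::{finite,field} list \<Rightarrow> bool" where
  "complete_rep6 L \<longleftrightarrow> length L = 6 \<and> (\<forall>x \<in> set L. x \<noteq> 0) \<and> distinct (map coset6 L)"

definition partial_rep6 :: "'a::{finite,field} list \<Rightarrow> bool" where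
  "partial_rep6 L \<longleftrightarrow> (\<forall>x \<in> set L. x \<noteq> 0 \<and> coset6 x \<noteq> C6) \<and> distinct (map coset6 L)"

end

theory Submission
  imports Defs "HOL-Algebra.Multiplicative_Group"
begin


definition gx :: "bool \<times> bool \<Rightarrow> bool \<times> bool \<Rightarrow> bool \<times> bool" where
  "gx u v = (fst u \<noteq> fst v, snd u \<noteq> snd v)"

lemma gx_simps[simp]: "gx u (gx u v) = v" "gx (gx v u) u = v" "gx u u = (False,False)"
  "gx (False,False) u = u" "gx u (False,False) = u"
  by (auto simp: gx_def prod_eq_iff)

lemma gx_comm: "gx u v = gx v u" by (auto simp: gx_def prod_eq_iff)
lemma gx_assoc: "gx (gx u v) w = gx u (gx v w)" by (auto simp: gx_def prod_eq_iff)
lemma gx_cancel[simp]: "gx u s = gx u s' \<longleftrightarrow> s = s'" "gx s u = gx s' u \<longleftrightarrow> s = s'"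
  by (auto simp: gx_def prod_eq_iff)

definition gr :: "nat \<Rightarrow> bool \<times> bool" where
  "gr i = (if i \<in> {3,7,13} then (False,True) else if i \<in> {4,8,14} then (True,False)
     else if i \<in> {10,11,12,15,16} then (True,True) else (False,False))"

definition bb :: "nat \<Rightarrow> nat set" where
  "bb j = {4*j+1, 4*j+2, 4*j+3, 4*j+4}"

definition PL :: "bool \<times> bool \<Rightarrow> (nat \<times> nat) list" where
  "PL c = (if c = (False,False) then [(1,2),(5,6),(10,11),(10,12),(11,12),(15,16)]
     else if c = (False,True) then [(1,3),(2,3),(5,7),(6,7),(14,15),(14,16)]
     else if c = (True,False) then [(1,4),(2,4),(5,8),(6,8),(13,15),(13,16)]
     else [(3,4),(7,8),(9,10),(9,11),(9,12),(13,14)])"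

definition UL :: "bool \<times> bool \<Rightarrow> nat list" where
  "UL c = filter (\<lambda>k. gr k = c) [1..<17]"

lemma bb_disj: "k \<in> bb j \<Longrightarrow> k \<in> bb j' \<Longrightarrow> j = j'"
  by (auto simp: bb_def)

lemma bb_range: "k \<in> bb j \<Longrightarrow> j < 4 \<Longrightarrow> k \<in> {1..16}"
  by (auto simp: bb_def)

lemma bb_card: "card (bb j) = 4"
  by (simp add: bb_def)

lemma j4: "j < (4::nat) \<Longrightarrow> j = 0 \<or> j = 1 \<or> j = 2 \<or> j = 3" by auto

lemma edge0: "\<forall>j\<in>{0,1,2,3::nat}. \<forall>i1\<in>bb j. \<forall>i2 \<in> bb j. i1 \<noteq> i2 \<longrightarrow>
   (i1,i2) \<in> set (PL (gx (gr i1) (gr i2))) \<or> (i2,i1) \<in> set (PL (gx (gr i1) (gr i2)))"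
  by (simp add: bb_def gr_def PL_def gx_def)

lemma edge: "j < 4 \<Longrightarrow> i1 \<in> bb j \<Longrightarrow> i2 \<in> bb j \<Longrightarrow> i1 \<noteq> i2 \<Longrightarrow>
   (i1,i2) \<in> set (PL (gx (gr i1) (gr i2))) \<or> (i2,i1) \<in> set (PL (gx (gr i1) (gr i2)))"
proof -
  assume "j < 4" "i1 \<in> bb j" "i2 \<in> bb j" "i1 \<noteq> i2"
  moreover have "j \<in> {0,1,2,3}" using \<open>j<4\<close> by auto
  ultimately show ?thesis using edge0 by blast
qed

lemma PL_len: "length (PL c) = 6" by (simp add: PL_def)

lemma cases4: "c = (False,False) \<or> c = (False,True) \<or> c = (True,False) \<or> c = (True,True)"
  by (cases c) auto

lemma edge_conv0: "\<forall>c \<in> {(False,False),(False,True),(True,False),(True,True)}. \<forall>(k,l) \<in> set (PL c). \<exists>j\<in>{0,1,2,3::nat}. k \<in> bb j \<and> l \<in> bb j \<and> k \<noteq> l \<and> gx (gr k) (gr l) = c"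
  by (simp add: bb_def gr_def PL_def gx_def)

lemma edge_conv: "(k,l) \<in> set (PL c) \<Longrightarrow> \<exists>j<4. k \<in> bb j \<and> l \<in> bb j \<and> k \<noteq> l \<and> gx (gr k) (gr l) = c"
proof -
  assume h: "(k,l) \<in> set (PL c)"
  have "c \<in> {(False,False),(False,True),(True,False),(True,True)}" using cases4[of c] by auto
  then obtain j where "j\<in>{0,1,2,3::nat}" "k \<in> bb j \<and> l \<in> bb j \<and> k \<noteq> l \<and> gx (gr k) (gr l) = c"
    using edge_conv0 h by fastforce
  then show ?thesis by (intro exI[of _ j]) auto
qed

lemma UL_mem: "j < 4 \<Longrightarrow> k \<in> bb j \<Longrightarrow> k \<in> set (UL (gr k))"
  by (auto simp: UL_def bb_def)

lemma UL_dist: "distinct (UL c)" by (simp add: UL_def)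

lemma UL_vals: "UL (False,False) = [1,2,5,6,9]" "UL (False,True) = [3,7,13]"
  "UL (True,False) = [4,8,14]" "UL (True,True) = [10,11,12,15,16]"
  by (simp_all add: UL_def upt_rec gr_def)



lemma C6_one[simp]: "1 \<in> C6" unfolding C6_def by (rule CollectI, rule exI[of _ 1]) simp
lemma C6_nz: "x \<in> C6 \<Longrightarrow> x \<noteq> 0" unfolding C6_def by auto
lemma C6_mult: "x \<in> C6 \<Longrightarrow> y \<in> C6 \<Longrightarrow> x * y \<in> C6"
proof -
  assume "x \<in> C6" "y \<in> C6"
  then obtain u v where "u \<noteq> 0" "x = u ^ 6" "v \<noteq> 0" "y = v ^ 6" unfolding C6_def by auto
  then show ?thesis unfolding C6_def by (auto simp: power_mult_distrib intro!: exI[of _ "u * v"])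
qed
lemma C6_inv: "x \<in> C6 \<Longrightarrow> inverse x \<in> C6"
proof -
  assume "x \<in> C6"
  then obtain u where "u \<noteq> 0" "x = u ^ 6" unfolding C6_def by auto
  then show ?thesis unfolding C6_def by (auto simp: power_inverse intro!: exI[of _ "inverse u"])
qed
lemma C6_pow: "y \<noteq> 0 \<Longrightarrow> y ^ 6 \<in> C6" unfolding C6_def by auto

lemma coset_self: "x \<noteq> 0 \<Longrightarrow> x \<in> coset6 x"
  unfolding coset6_def by (rule image_eqI[of _ _ 1]) auto

lemma coset_eq: assumes "x \<noteq> 0" "y \<in> coset6 x" shows "coset6 y = coset6 x"
proof -
  obtain c where c: "c \<in> C6" "y = x * c" using assms(2) unfolding coset6_def by auto
  show ?thesis
  proof
    show "coset6 y \<subseteq> coset6 x" unfolding coset6_def using c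
      by (auto simp: mult.assoc intro!: image_eqI C6_mult)
    show "coset6 x \<subseteq> coset6 y" unfolding coset6_def
    proof
      fix z assume "z \<in> (*) x ` C6"
      then obtain c' where "c' \<in> C6" "z = x * c'" by auto
      moreover have "x * c' = y * (inverse c * c')" using c C6_nz[of c] by (simp add: field_simps)
      ultimately show "z \<in> (*) y ` C6" using c by (auto intro!: image_eqI C6_mult C6_inv)
    qed
  qed
qed

lemma coset_mult: "u \<in> C6 \<Longrightarrow> x \<noteq> 0 \<Longrightarrow> coset6 (u * x) = coset6 x"
  by (rule coset_eq) (auto simp: coset6_def mult.commute)

lemma coset_one: "coset6 1 = C6" by (simp add: coset6_def)

lemma coset_C6: "x \<in> C6 \<Longrightarrow> coset6 x = C6"
  using coset_mult[of x 1] by (simp add: coset_one)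

lemma gen_exists:
  "\<exists>g::'a::{finite,field}. \<forall>x. x \<noteq> 0 \<longrightarrow> (\<exists>i::nat. x = g ^ i)"
proof -
  define R :: "'a ring" where "R = \<lparr>carrier = UNIV, mult = (*), one = 1, zero = 0, add = (+)\<rparr>"
  have cr: "cring R" unfolding R_def
  proof (rule cringI)
    show "abelian_group \<lparr>carrier = (UNIV::'a set), mult = (*), one = 1, zero = 0, add = (+)\<rparr>"
      by (rule abelian_groupI) (auto intro: left_minus)
    show "Group.comm_monoid \<lparr>carrier = (UNIV::'a set), mult = (*), one = 1, zero = 0, add = (+)\<rparr>"
      by (rule monoid.monoid_comm_monoidI) (auto intro!: monoid.intro simp: mult.assoc mult.commute)
  qed (auto simp: distrib_right)
  have fR: "field R"
    apply (rule cring.cring_fieldI2[OF cr])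
    unfolding R_def apply simp
    apply simp
    by (metis right_inverse)
  have pw: "x [^]\<^bsub>R\<^esub> (i::nat) = x ^ i" for x :: 'a and i
    by (induct i) (simp_all add: R_def mult.commute)
  obtain g where "g \<in> carrier (mult_of R)" "carrier (mult_of R) = {g[^]\<^bsub>R\<^esub>i | i::nat . i \<in> UNIV}"
  proof -
    have "finite (carrier R)" by (simp add: R_def)
    from field.finite_field_mult_group_has_gen[OF fR this] obtain a where
      "a \<in> carrier (mult_of R)" "carrier (mult_of R) = {a[^]\<^bsub>R\<^esub>i | i::nat . i \<in> UNIV}"
      by (elim bexE)
    then show ?thesis by (rule that)
  qed
  then have "\<forall>x. x \<noteq> 0 \<longrightarrow> (\<exists>i::nat. x = g ^ i)"
    unfolding pw carrier_mult_of
  proof -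
    assume "carrier R - {\<zero>\<^bsub>R\<^esub>} = {g ^ i |i. i \<in> UNIV}"
    then have "UNIV - {0} = {g ^ i |i. i \<in> UNIV}" by (simp add: R_def)
    then show ?thesis by blast
  qed
  then show ?thesis by blast
qed

lemma card_nz: "card (UNIV - {0::'a::{finite,field}}) = CARD('a) - 1"
  by (simp add: card_Diff_singleton)

lemma field_facts:
  assumes q: "CARD('a::{finite,field}) = 12 * n + 1"
  shows "(-1::'a) \<in> C6 \<and> (1::'a) \<noteq> -1 \<and>
    (\<forall>L d. complete_rep6 L \<longrightarrow> d \<noteq> (0::'a) \<longrightarrow> (\<exists>e<6. coset6 d = coset6 (L!e)))"
proof -
  obtain g :: 'a where g: "\<And>x. x \<noteq> 0 \<Longrightarrow> \<exists>i::nat. x = g ^ i" using gen_exists by blast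
  have "card {0::'a, 1} = 2" by simp
  moreover have "card {0::'a,1} \<le> CARD('a)" by (rule card_mono) auto
  ultimately have n1: "n \<ge> 1" using q by auto
  have "card {0::'a, 1} < card (UNIV::'a set)" using q n1 by simp
  then have "{0::'a,1} \<noteq> UNIV" by (metis less_irrefl)
  then obtain x0 :: 'a where "x0 \<notin> {0,1}" by blast
  then obtain i0 where "x0 = g ^ i0" "i0 \<noteq> 0" using g by (metis insertCI power_0)
  then have gnz: "g \<noteq> 0" using \<open>x0 \<notin> {0,1}\<close> by auto
  have low: "CARD('a) - 1 \<le> m" if "g ^ m = 1" "m > 0" for m
  proof -
    have "UNIV - {0} \<subseteq> (\<lambda>i. g ^ i) ` {..<m}"
    proof
      fix x :: 'a assume "x \<in> UNIV - {0}"
      then obtain i where "x = g ^ i" using g by auto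
      also have "g ^ i = g ^ (m * (i div m) + i mod m)" by (simp only: mult_div_mod_eq)
      also have "\<dots> = (g ^ m) ^ (i div m) * g ^ (i mod m)" by (simp only: power_add power_mult)
      also have "\<dots> = g ^ (i mod m)" using that by simp
      finally show "x \<in> (\<lambda>i. g ^ i) ` {..<m}" using that by auto
    qed
    then have "card (UNIV - {0::'a}) \<le> card ((\<lambda>i. g ^ i) ` {..<m})" by (intro card_mono) auto
    also have "\<dots> \<le> m" using card_image_le[of "{..<m}"] by simp
    finally show ?thesis by (simp add: card_nz)
  qed
  have "\<not> inj_on (\<lambda>i. g ^ i) {..CARD('a) - 1}"
  proof
    assume "inj_on (\<lambda>i. g ^ i) {..CARD('a) - 1}"
    moreover have "(\<lambda>i. g ^ i) ` {..CARD('a) - 1} \<subseteq> UNIV - {0}" using gnz by auto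
    ultimately have "card {..CARD('a) - 1} \<le> card (UNIV - {0::'a})"
      by (intro card_inj_on_le) auto
    then show False using q by (simp add: card_nz)
  qed
  then obtain i j where ij: "i \<le> CARD('a) - 1" "j \<le> CARD('a) - 1" "i \<noteq> j" "g ^ i = g ^ j"
    unfolding inj_on_def by auto
  have "\<exists>m. 0 < m \<and> m \<le> CARD('a) - 1 \<and> g ^ m = 1"
  proof -
    have gen: "g ^ (j' - i') = 1 \<and> 0 < j' - i' \<and> j' - i' \<le> CARD('a) - 1"
      if "i' < j'" "j' \<le> CARD('a) - 1" "g ^ i' = g ^ j'" for i' j'
    proof -
      have "j' = i' + (j' - i')" using that by simp
      then have "g ^ j' = g ^ i' * g ^ (j' - i')" by (metis power_add)
      then show ?thesis using that gnz by auto
    qed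
    show ?thesis
    proof (cases "i < j")
      case True then show ?thesis using gen[of i j] ij by blast
    next
      case False then have "j < i" using ij(3) by simp
      then show ?thesis using gen[of j i] ij by (metis zero_less_diff)
    qed
  qed
  then obtain m where m: "0 < m" "m \<le> CARD('a) - 1" "g ^ m = 1" by blast
  with low have m12: "m = 12 * n" using q by force
  define h where "h = g ^ (6 * n)"
  have hsq: "h * h = 1" using m m12 by (simp add: h_def power_add[symmetric])
  have h1: "h \<noteq> 1"
  proof
    assume "h = 1"
    then have "12 * n \<le> 6 * n" using low[of "6*n"] n1 q by (simp add: h_def)
    then show False using n1 by simp
  qed
  have "(h - 1) * (h + 1) = 0" using hsq by (simp add: algebra_simps)
  then have hm: "h = -1" using h1 by (simp add: eq_neg_iff_add_eq_0)
  have neg1: "(-1::'a) \<in> C6"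
    using C6_pow[of "g ^ n"] gnz by (simp add: hm[symmetric] h_def power_mult[symmetric] mult.commute)
  have two: "(1::'a) \<noteq> -1" using hm h1 by simp
  define T where "T = (\<lambda>r. coset6 (g ^ r)) ` {..<6}"
  have inT: "coset6 x \<in> T" if xnz: "x \<noteq> 0" for x
  proof -
    obtain i where "x = g ^ i" using g xnz by auto
    also have "g ^ i = (g ^ (i div 6)) ^ 6 * g ^ (i mod 6)"
      by (metis div_mult_mod_eq power_add power_mult mult.commute)
    finally have "coset6 x = coset6 (g ^ (i mod 6))"
      using coset_mult[OF C6_pow[of "g ^ (i div 6)"], of "g ^ (i mod 6)"] gnz by simp
    then show ?thesis unfolding T_def by auto
  qed
  have cov: "\<exists>e<6. coset6 d = coset6 (L!e)" if L: "complete_rep6 L" and d: "d \<noteq> 0" for L and d :: 'a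
  proof -
    have sub: "set (map coset6 L) \<subseteq> T" using L inT unfolding complete_rep6_def by auto
    have "card T \<le> 6" unfolding T_def using card_image_le[of "{..<6::nat}"] by simp
    moreover have "card (set (map coset6 L)) = 6" using L unfolding complete_rep6_def
      by (metis distinct_card length_map)
    ultimately have "set (map coset6 L) = T" using sub by (intro card_seteq) (auto simp: T_def)
    then have "coset6 d \<in> set (map coset6 L)" using inT[OF d] by simp
    then obtain e where "e < length L" "coset6 d = coset6 (L!e)"
      by (auto simp: in_set_conv_nth)
    then show ?thesis using L unfolding complete_rep6_def by auto
  qed
  show ?thesis using neg1 two cov by blast
qed

lemma half_exists:
  assumes neg1: "(-1::'a::{finite,field}) \<in> C6" and two: "(1::'a) \<noteq> -1"
  shows "\<exists>M::'a set. M \<subseteq> C6 \<and> (\<forall>c\<in>C6. c \<in> M \<or> -c \<in> M) \<and> (\<forall>c\<in>M. -c \<notin> M)"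
proof -
  define ch where "ch c = (SOME z. z \<in> {c, -c})" for c :: 'a
  have ch1: "ch c \<in> {c, -c}" for c unfolding ch_def by (rule someI[of _ c]) simp
  have ch2: "ch (-c) = ch c" for c unfolding ch_def by (simp add: insert_commute)
  define M where "M = {c \<in> C6. ch c = c}"
  have negC: "-c \<in> C6" if "c \<in> C6" for c :: 'a using C6_mult[OF neg1 that] by simp
  have "\<forall>c\<in>C6. c \<in> M \<or> -c \<in> M"
  proof
    fix c :: 'a assume c: "c \<in> C6"
    show "c \<in> M \<or> -c \<in> M"
    proof (cases "ch c = c")
      case True then show ?thesis using c by (simp add: M_def)
    next
      case False then have "ch c = -c" using ch1[of c] by auto
      then show ?thesis using c negC[OF c] ch2[of c] by (simp add: M_def)
    qed
  qed
  moreover have "\<forall>c\<in>M. -c \<notin> M"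
  proof (intro ballI notI)
    fix c :: 'a assume "c \<in> M" "-c \<in> M"
    then have "c = -c" "c \<noteq> 0" using ch2[of c] C6_nz by (auto simp: M_def)
    then have "2 * c = 0" by (simp add: algebra_simps)
    moreover have "(2::'a) \<noteq> 0" using two by (metis add_eq_0_iff one_add_one)
    ultimately show False using \<open>c \<noteq> 0\<close> by simp
  qed
  ultimately show ?thesis by (intro exI[of _ M]) (auto simp: M_def)
qed



lemma gx_pair[simp]: "gx (gx u s) (gx v s) = gx u v" by (auto simp: gx_def prod_eq_iff)
lemma gx_fix: "gx u (gx v s) = s \<Longrightarrow> u = v" by (auto simp: gx_def prod_eq_iff)

lemma pc_image: "finite I \<Longrightarrow> pair_count (image_mset f (mset_set I)) x y = card {i\<in>I. x \<in> f i \<and> y \<in> f i}"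
  unfolding pair_count_def by (simp add: filter_mset_image_mset)

locale L6 =
  fixes a :: "nat \<Rightarrow> 'a::{finite,field}" and M :: "'a set"
  assumes nz: "\<And>i. i \<in> {1..16} \<Longrightarrow> a i \<noteq> 0"
    and DL: "\<And>c. complete_rep6 (map (\<lambda>(k,l). a k - a l) (PL c))"
    and ULh: "\<And>c. partial_rep6 (map a (UL c))"
    and neg1: "(-1::'a) \<in> C6" and two: "(1::'a) \<noteq> -1"
    and cover: "\<And>L d. complete_rep6 (L::'a list) \<Longrightarrow> d \<noteq> 0 \<Longrightarrow> \<exists>e<6. coset6 d = coset6 (L!e)"
    and MC: "M \<subseteq> C6" and M1: "\<And>c. c \<in> C6 \<Longrightarrow> c \<in> M \<or> -c \<in> M"
    and M2: "\<And>c. c \<in> M \<Longrightarrow> -c \<notin> M"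
begin

lemma negC: "(c::'a) \<in> C6 \<Longrightarrow> -c \<in> C6" using C6_mult[OF neg1, of c] by simp
lemma M_C6: "m \<in> M \<Longrightarrow> m \<in> C6" using MC by auto
lemma M_nz: "m \<in> M \<Longrightarrow> m \<noteq> 0" using C6_nz M_C6 by auto

definition dlt :: "bool \<times> bool \<Rightarrow> nat \<Rightarrow> 'a" where
  "dlt c e = (\<lambda>(k,l). a k - a l) (PL c ! e)"

lemma dlt_nth: "e < 6 \<Longrightarrow> map (\<lambda>(k,l). a k - a l) (PL c) ! e = dlt c e"
  by (simp add: dlt_def PL_len)

lemma dl_inj: assumes "e < 6" "e' < 6" "coset6 (dlt c e) = coset6 (dlt c e')" shows "e = e'"
proof -
  have D: "distinct (map coset6 (map (\<lambda>(k,l). a k - a l) (PL c)))" using DL[of c] by (simp add: complete_rep6_def)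
  have "map coset6 (map (\<lambda>(k,l). a k - a l) (PL c)) ! e = map coset6 (map (\<lambda>(k,l). a k - a l) (PL c)) ! e'"
    using assms by (simp add: PL_len dlt_def)
  then show ?thesis using nth_eq_iff_index_eq[OF D] assms by (simp add: PL_len)
qed

lemma dl_nz: "e < 6 \<Longrightarrow> dlt c e \<noteq> 0"
  using DL[of c] unfolding complete_rep6_def
  by (metis dlt_nth length_map nth_mem PL_len)

lemma edge_idx: assumes "j < 4" "i1 \<in> bb j" "i2 \<in> bb j" "i1 \<noteq> i2"
  shows "\<exists>e<6. PL (gx (gr i1) (gr i2)) ! e = (i1,i2) \<or> PL (gx (gr i1) (gr i2)) ! e = (i2,i1)"
  using edge[OF assms] by (metis in_set_conv_nth PL_len)

lemma diff_info: assumes "j < 4" "i1 \<in> bb j" "i2 \<in> bb j" "i1 \<noteq> i2"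
  shows "\<exists>e<6. (PL (gx (gr i1) (gr i2)) ! e = (i1,i2) \<or> PL (gx (gr i1) (gr i2)) ! e = (i2,i1)) \<and>
     (a i2 - a i1 = dlt (gx (gr i1) (gr i2)) e \<or> a i2 - a i1 = - dlt (gx (gr i1) (gr i2)) e)"
proof -
  obtain e where "e < 6" "PL (gx (gr i1) (gr i2)) ! e = (i1,i2) \<or> PL (gx (gr i1) (gr i2)) ! e = (i2,i1)"
    using edge_idx[OF assms] by blast
  then show ?thesis by (intro exI[of _ e]) (auto simp: dlt_def)
qed

lemma diff_nz: assumes "j < 4" "i1 \<in> bb j" "i2 \<in> bb j" "i1 \<noteq> i2" shows "a i1 \<noteq> a i2"
proof
  assume h: "a i1 = a i2"
  obtain e where "e < 6" "a i2 - a i1 = dlt (gx (gr i1) (gr i2)) e \<or> a i2 - a i1 = - dlt (gx (gr i1) (gr i2)) e"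
    using diff_info[OF assms] by blast
  then show False using h dl_nz[of e] by auto
qed

lemma diff_coset: assumes "j < 4" "i1 \<in> bb j" "i2 \<in> bb j" "i1 \<noteq> i2" "m \<in> M"
  shows "\<exists>e<6. (PL (gx (gr i1) (gr i2)) ! e = (i1,i2) \<or> PL (gx (gr i1) (gr i2)) ! e = (i2,i1)) \<and>
     coset6 (m * (a i2 - a i1)) = coset6 (dlt (gx (gr i1) (gr i2)) e)"
proof -
  obtain e where e: "e < 6" "PL (gx (gr i1) (gr i2)) ! e = (i1,i2) \<or> PL (gx (gr i1) (gr i2)) ! e = (i2,i1)"
     "a i2 - a i1 = dlt (gx (gr i1) (gr i2)) e \<or> a i2 - a i1 = - dlt (gx (gr i1) (gr i2)) e"
    using diff_info[OF assms(1-4)] by blast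
  have mC: "m \<in> C6" "-m \<in> C6" using M_C6[OF assms(5)] negC by auto
  have "coset6 (m * (a i2 - a i1)) = coset6 (dlt (gx (gr i1) (gr i2)) e)"
    using e(3)
  proof
    assume "a i2 - a i1 = dlt (gx (gr i1) (gr i2)) e"
    then show ?thesis using coset_mult[OF mC(1) dl_nz[OF e(1)]] by simp
  next
    assume "a i2 - a i1 = - dlt (gx (gr i1) (gr i2)) e"
    then show ?thesis using coset_mult[OF mC(2) dl_nz[OF e(1)]] by simp
  qed
  then show ?thesis using e by blast
qed

lemma inl_unique:
  assumes j: "j < 4" "j' < 4" and m: "m \<in> M" "m' \<in> M"
    and i: "i1 \<in> bb j" "i2 \<in> bb j" "i1 \<noteq> i2" "i1' \<in> bb j'" "i2' \<in> bb j'" "i1' \<noteq> i2'"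
    and e1: "m * a i1 + t = m' * a i1' + t'" and e2: "m * a i2 + t = m' * a i2' + t'"
    and g1: "gx (gr i1) s = gx (gr i1') s'" and g2: "gx (gr i2) s = gx (gr i2') s'"
  shows "j = j' \<and> t = t' \<and> s = s' \<and> m = m'"
proof -
  have c: "gx (gr i1) (gr i2) = gx (gr i1') (gr i2')"
    using gx_pair[of "gr i1" s "gr i2"] gx_pair[of "gr i1'" s' "gr i2'"] g1 g2 by simp
  have "m * (a i2 - a i1) = (m * a i2 + t) - (m * a i1 + t)" by (simp add: algebra_simps)
  also have "\<dots> = (m' * a i2' + t') - (m' * a i1' + t')" using e1 e2 by simp
  also have "\<dots> = m' * (a i2' - a i1')" by (simp add: algebra_simps)
  finally have d: "m * (a i2 - a i1) = m' * (a i2' - a i1')" .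
  obtain e where e: "e < 6" "PL (gx (gr i1) (gr i2)) ! e = (i1,i2) \<or> PL (gx (gr i1) (gr i2)) ! e = (i2,i1)"
     "coset6 (m * (a i2 - a i1)) = coset6 (dlt (gx (gr i1) (gr i2)) e)"
    using diff_coset[OF j(1) i(1-3) m(1)] by blast
  obtain e' where e': "e' < 6" "PL (gx (gr i1) (gr i2)) ! e' = (i1',i2') \<or> PL (gx (gr i1) (gr i2)) ! e' = (i2',i1')"
     "coset6 (m' * (a i2' - a i1')) = coset6 (dlt (gx (gr i1) (gr i2)) e')"
    using diff_coset[OF j(2) i(4-6) m(2)] c by auto
  have "coset6 (dlt (gx (gr i1) (gr i2)) e) = coset6 (dlt (gx (gr i1) (gr i2)) e')" using e(3) e'(3) d by simp
  then have "e = e'" using dl_inj[OF e(1) e'(1)] by blast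
  then have cases: "(i1' = i1 \<and> i2' = i2) \<or> (i1' = i2 \<and> i2' = i1)" using e(2) e'(2) i(3) by auto
  have jj: "j = j'" using cases i bb_disj by metis
  show ?thesis using cases
  proof
    assume h: "i1' = i1 \<and> i2' = i2"
    have "a i2 - a i1 \<noteq> 0" using diff_nz[OF j(1) i(1-3)] by simp
    then have "m = m'" using d h by simp
    then show ?thesis using jj h e1 g1 by simp
  next
    assume h: "i1' = i2 \<and> i2' = i1"
    have "a i2 - a i1 \<noteq> 0" using diff_nz[OF j(1) i(1-3)] by simp
    moreover have "m * (a i2 - a i1) = (- m') * (a i2 - a i1)" using d h by (simp add: algebra_simps)
    ultimately have "m = - m'" by (metis mult_cancel_right)
    then show ?thesis using M2[OF m(2)] m(1) by simp
  qed
qed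

lemma inl_exists:
  fixes x y :: 'a
  assumes "x \<noteq> y"
  shows "\<exists>j t s m i1 i2. j < 4 \<and> m \<in> M \<and> i1 \<in> bb j \<and> i2 \<in> bb j \<and> i1 \<noteq> i2 \<and>
     m * a i1 + t = x \<and> m * a i2 + t = y \<and> gx (gr i1) s = g \<and> gx (gr i2) s = h"
proof -
  define c where "c = gx g h"
  define d where "d = y - x"
  have dnz: "d \<noteq> 0" using assms by (simp add: d_def)
  obtain e where e: "e < 6" "coset6 d = coset6 (map (\<lambda>(k,l). a k - a l) (PL c) ! e)"
    using cover[OF DL dnz] by blast
  obtain k l where kl: "PL c ! e = (k,l)" by fastforce
  have "(k,l) \<in> set (PL c)" using kl e(1) by (metis nth_mem PL_len)
  then obtain j where j: "j < 4" "k \<in> bb j" "l \<in> bb j" "k \<noteq> l" "gx (gr k) (gr l) = c"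
    using edge_conv by blast
  have "map (\<lambda>(k,l). a k - a l) (PL c) ! e = a k - a l" using kl e(1) by (simp add: PL_len)
  then have "d \<in> coset6 (a k - a l)" using e coset_self[OF dnz] by simp
  then obtain u where u: "u \<in> C6" "d = (a k - a l) * u" unfolding coset6_def by auto
  have gk: "gx (gr k) (gx (gr l) g) = h" "gx (gr l) (gx (gr k) g) = h"
    using j(5) unfolding c_def by (auto simp: gx_def prod_eq_iff)
  show ?thesis
  proof (cases "u \<in> M")
    case True
    show ?thesis
      apply (rule exI[of _ j], rule exI[of _ "x - u * a l"], rule exI[of _ "gx (gr l) g"], rule exI[of _ u],
             rule exI[of _ l], rule exI[of _ k])
      using j True u gk by (auto simp: d_def algebra_simps)
  next
    case False
    then have "-u \<in> M" using M1[OF u(1)] by simp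
    show ?thesis
      apply (rule exI[of _ j], rule exI[of _ "x + u * a k"], rule exI[of _ "gx (gr k) g"], rule exI[of _ "-u"],
             rule exI[of _ k], rule exI[of _ l])
      using j \<open>-u \<in> M\<close> u gk by (auto simp: d_def algebra_simps)
  qed
qed

end


context L6
begin

definition blk :: "(nat \<times> 'a \<times> (bool \<times> bool) \<times> 'a) + 'a \<Rightarrow> ('a \<times> (bool \<times> bool)) set" where
  "blk i = (case i of Inl (j,t,s,m) \<Rightarrow> (\<lambda>k. (m * a k + t, gx (gr k) s)) ` bb j | Inr t \<Rightarrow> {t} \<times> UNIV)"

definition np :: "(nat \<times> 'a \<times> (bool \<times> bool) \<times> 'a) + 'a \<Rightarrow> 'a \<times> (bool \<times> bool)" where
  "np i = (case i of Inl (j,t,s,m) \<Rightarrow> (t,s) | Inr t \<Rightarrow> (t + 1, (False,False)))"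

definition Iset :: "((nat \<times> 'a \<times> (bool \<times> bool) \<times> 'a) + 'a) set" where
  "Iset = Inl ` {(j,t,s,m). j < 4 \<and> m \<in> M} \<union> range Inr"

lemma blk_simps[simp]: "blk (Inl (j,t,s,m)) = (\<lambda>k. (m * a k + t, gx (gr k) s)) ` bb j"
  "blk (Inr t) = {t} \<times> UNIV" by (simp_all add: blk_def)
lemma np_simps[simp]: "np (Inl (j,t,s,m)) = (t,s)" "np (Inr t) = (t + 1, (False,False))"
  by (simp_all add: np_def)
lemma I_simps[simp]: "Inl (j,t,s,m) \<in> Iset \<longleftrightarrow> j < 4 \<and> m \<in> M" "Inr t \<in> Iset"
  by (auto simp: Iset_def)

lemma finI: "finite Iset"
proof -
  have "({(j,t,s,m). j < (4::nat) \<and> m \<in> M} :: (nat \<times> 'a \<times> (bool\<times>bool) \<times> 'a) set) \<subseteq> {..<4::nat} \<times> (UNIV :: ('a \<times> (bool\<times>bool) \<times> 'a) set)" by auto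
  then have "finite ({(j,t,s,m). j < (4::nat) \<and> m \<in> M} :: (nat \<times> 'a \<times> (bool\<times>bool) \<times> 'a) set)" by (rule finite_subset) simp
  then show ?thesis unfolding Iset_def by simp
qed

lemma idx_cases: obtains j t s m where "i = Inl (j,t,s,m)" | t where "i = Inr t"
  by (metis obj_sumE prod_cases4)

lemma notC: "j < 4 \<Longrightarrow> k \<in> bb j \<Longrightarrow> a k \<notin> C6"
proof
  assume "j < 4" "k \<in> bb j" "a k \<in> C6"
  then have "a k \<in> set (map a (UL (gr k)))" using UL_mem by auto
  then have "coset6 (a k) \<noteq> C6" using ULh[of "gr k"] unfolding partial_rep6_def by blast
  then show False using coset_C6[OF \<open>a k \<in> C6\<close>] by simp
qed

lemma ak_nz: "j < 4 \<Longrightarrow> k \<in> bb j \<Longrightarrow> a k \<noteq> 0" using nz bb_range by blast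

lemma uk: assumes "j < 4" "j' < 4" "k \<in> bb j" "k' \<in> bb j'" "gr k = gr k'" "coset6 (a k) = coset6 (a k')"
  shows "k = k'"
proof -
  have D: "distinct (map (coset6 \<circ> a) (UL (gr k)))" using ULh[of "gr k"] unfolding partial_rep6_def by simp
  have "k \<in> set (UL (gr k))" "k' \<in> set (UL (gr k))" using UL_mem assms by metis+
  then show ?thesis using D assms(6) unfolding distinct_map inj_on_def by auto
qed

lemma ext_eq: assumes "j < 4" "j' < 4" "m \<in> M" "m' \<in> M" "k \<in> bb j" "k' \<in> bb j'" "gr k = gr k'"
  "m * a k = u * (m' * a k')" "u \<in> C6"
  shows "k = k' \<and> j = j' \<and> m = u * m'"
proof -
  have "coset6 (a k) = coset6 (m * a k)" using coset_mult[OF M_C6[OF assms(3)] ak_nz[OF assms(1,5)]] by simp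
  also have "\<dots> = coset6 ((u * m') * a k')" using assms(8) by (simp add: mult.assoc)
  also have "\<dots> = coset6 (a k')" using coset_mult[OF C6_mult[OF assms(9) M_C6[OF assms(4)]] ak_nz[OF assms(2,6)]] .
  finally have kk: "k = k'" using uk assms by blast
  then have "m * a k = (u * m') * a k" using assms(8) by (simp add: mult.assoc)
  then have "m = u * m'" using ak_nz[OF assms(1,5)] by simp
  then show ?thesis using kk bb_disj assms(5,6) by blast
qed

lemma A_ex: assumes "P \<noteq> Q" shows "\<exists>i\<in>Iset. P \<in> blk i \<and> Q \<in> blk i"
proof -
  obtain x g where P: "P = (x,g)" by (cases P) auto
  obtain y h where Q: "Q = (y,h)" by (cases Q) auto
  show ?thesis
  proof (cases "x = y")
    case True then show ?thesis using P Q by (intro bexI[of _ "Inr x"]) auto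
  next
    case False
    then obtain j t s m i1 i2 where "j < 4 \<and> m \<in> M \<and> i1 \<in> bb j \<and> i2 \<in> bb j \<and> i1 \<noteq> i2 \<and>
     m * a i1 + t = x \<and> m * a i2 + t = y \<and> gx (gr i1) s = g \<and> gx (gr i2) s = h"
      using inl_exists by blast
    then show ?thesis using P Q by (intro bexI[of _ "Inl (j,t,s,m)"]) auto
  qed
qed

lemma A_un: assumes "P \<noteq> Q" "i \<in> Iset" "i' \<in> Iset" "P \<in> blk i" "Q \<in> blk i" "P \<in> blk i'" "Q \<in> blk i'"
  shows "i = i'"
proof -
  have noinr: False if h1: "P \<in> blk (Inl (j,t,s,m))" and h2: "Q \<in> blk (Inl (j,t,s,m))" and h3: "j < 4" "m \<in> M" "fst P = fst Q" for j t s m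
  proof -
    obtain k1 where "k1 \<in> bb j" "P = (m * a k1 + t, gx (gr k1) s)" using h1 by auto
    moreover obtain k2 where "k2 \<in> bb j" "Q = (m * a k2 + t, gx (gr k2) s)" using h2 by auto
    ultimately have k: "k1 \<in> bb j" "k2 \<in> bb j" "P = (m * a k1 + t, gx (gr k1) s)" "Q = (m * a k2 + t, gx (gr k2) s)"
      by auto
    then have "k1 \<noteq> k2" using assms(1) by auto
    then have "a k1 \<noteq> a k2" using diff_nz k h3 by blast
    then show False using k h3 M_nz by auto
  qed
  show ?thesis
  proof (cases i rule: idx_cases)
    case (1 j t s m)
    note i1 = 1
    show ?thesis
    proof (cases i' rule: idx_cases)
      case (1 j' t' s' m')
      obtain k1 where k1: "k1 \<in> bb j" "P = (m * a k1 + t, gx (gr k1) s)" using assms(4) i1 by auto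
      obtain k2 where k2: "k2 \<in> bb j" "Q = (m * a k2 + t, gx (gr k2) s)" using assms(5) i1 by auto
      obtain k1' where k1': "k1' \<in> bb j'" "P = (m' * a k1' + t', gx (gr k1') s')" using assms(6) 1 by auto
      obtain k2' where k2': "k2' \<in> bb j'" "Q = (m' * a k2' + t', gx (gr k2') s')" using assms(7) 1 by auto
      note k = k1(1) k2(1) k1(2) k2(2)
      note k' = k1'(1) k2'(1) k1'(2) k2'(2)
      have "k1 \<noteq> k2" "k1' \<noteq> k2'" using assms(1) k k' by auto
      then have "j = j' \<and> t = t' \<and> s = s' \<and> m = m'"
        using inl_unique[of j j' m m' k1 k2 k1' k2' t t' s s'] k k' assms(2,3) i1 1 by auto
      then show ?thesis using i1 1 by simp
    next
      case (2 t')
      then have "fst P = fst Q" using assms by auto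
      then show ?thesis using noinr[of j t s m] assms i1 by auto
    qed
  next
    case (2 t)
    note i2 = 2
    show ?thesis
    proof (cases i' rule: idx_cases)
      case (1 j' t' s' m')
      have "fst P = fst Q" using assms i2 by auto
      then show ?thesis using noinr[of j' t' s' m'] assms 1 by auto
    next
      case (2 t')
      then show ?thesis using assms i2 by auto
    qed
  qed
qed

lemma B_np: "i \<in> Iset \<Longrightarrow> np i \<notin> blk i"
proof (cases i rule: idx_cases)
  case (1 j t s m)
  assume "i \<in> Iset"
  then show ?thesis using 1 M_nz ak_nz by auto
next
  case (2 t) then show ?thesis by auto
qed

lemma C_card: "i \<in> Iset \<Longrightarrow> card (blk i) = 4"
proof (cases i rule: idx_cases)
  case (1 j t s m)
  assume "i \<in> Iset"
  then have jm: "j < 4" "m \<in> M" using 1 by auto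
  have "inj_on (\<lambda>k. (m * a k + t, gx (gr k) s)) (bb j)"
  proof (rule inj_onI)
    fix k k' assume "k \<in> bb j" "k' \<in> bb j" "(m * a k + t, gx (gr k) s) = (m * a k' + t, gx (gr k') s)"
    then show "k = k'" using diff_nz[OF jm(1)] M_nz[OF jm(2)] by fastforce
  qed
  then show ?thesis using 1 by (simp add: card_image bb_card)
next
  case (2 t) then show ?thesis by (simp add: card_cartesian_product)
qed

definition rel where "rel i P Q \<longleftrightarrow> P = np i \<and> Q \<in> blk i"

lemma D1: assumes "i \<in> Iset" "i' \<in> Iset" "rel i P Q" "rel i' P Q" shows "i = i'"
proof (cases i rule: idx_cases)
  case (1 j t s m)
  note i1 = 1
  obtain k where k: "k \<in> bb j" "P = (t,s)" "Q = (m * a k + t, gx (gr k) s)" using assms i1 by (auto simp: rel_def)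
  have jm: "j < 4" "m \<in> M" using assms i1 by auto
  show ?thesis
  proof (cases i' rule: idx_cases)
    case (1 j' t' s' m')
    obtain k' where k': "k' \<in> bb j'" "P = (t',s')" "Q = (m' * a k' + t', gx (gr k') s')" using assms 1 by (auto simp: rel_def)
    have jm': "j' < 4" "m' \<in> M" using assms 1 by auto
    have tt: "t = t'" "s = s'" using k k' by auto
    have g: "gr k = gr k'" using k k' tt by auto
    have "m * a k = 1 * (m' * a k')" using k k' tt by auto
    then have "k = k' \<and> j = j' \<and> m = 1 * m'" using ext_eq[OF jm(1) jm'(1) jm(2) jm'(2) k(1) k'(1) g _ C6_one] by blast
    then show ?thesis using i1 1 tt by simp
  next
    case (2 t')
    then have "P = (t' + 1, (False,False))" "fst Q = t'" using assms by (auto simp: rel_def)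
    then have "m * a k + 1 = 0" using k by (auto simp: algebra_simps)
    then have "m * a k = -1" by (simp add: eq_neg_iff_add_eq_0)
    then have "a k = -1 * inverse m" using M_nz[OF jm(2)] by (simp add: field_simps)
    then have "a k \<in> C6" using C6_mult[OF neg1 C6_inv[OF M_C6[OF jm(2)]]] by simp
    then show ?thesis using notC[OF jm(1) k(1)] by simp
  qed
next
  case (2 t)
  note i2 = 2
  show ?thesis
  proof (cases i' rule: idx_cases)
    case (1 j' t' s' m')
    obtain k' where k': "k' \<in> bb j'" "P = (t',s')" "Q = (m' * a k' + t', gx (gr k') s')" using assms 1 by (auto simp: rel_def)
    have jm': "j' < 4" "m' \<in> M" using assms 1 by auto
    have "P = (t + 1, (False,False))" "fst Q = t" using assms i2 by (auto simp: rel_def)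
    then have "m' * a k' + 1 = 0" using k' by (auto simp: algebra_simps)
    then have "m' * a k' = -1" by (simp add: eq_neg_iff_add_eq_0)
    then have "a k' = -1 * inverse m'" using M_nz[OF jm'(2)] by (simp add: field_simps)
    then have "a k' \<in> C6" using C6_mult[OF neg1 C6_inv[OF M_C6[OF jm'(2)]]] by simp
    then show ?thesis using notC[OF jm'(1) k'(1)] by simp
  next
    case (2 t')
    then show ?thesis using assms i2 by (auto simp: rel_def)
  qed
qed

lemma D2: assumes "i \<in> Iset" "i' \<in> Iset" "rel i P Q" "rel i' Q P" shows False
proof (cases i rule: idx_cases)
  case (1 j t s m)
  note i1 = 1
  obtain k where k: "k \<in> bb j" "P = (t,s)" "Q = (m * a k + t, gx (gr k) s)" using assms i1 by (auto simp: rel_def)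
  have jm: "j < 4" "m \<in> M" using assms i1 by auto
  show ?thesis
  proof (cases i' rule: idx_cases)
    case (1 j' t' s' m')
    obtain k' where k': "k' \<in> bb j'" "Q = (t',s')" "P = (m' * a k' + t', gx (gr k') s')" using assms 1 by (auto simp: rel_def)
    have jm': "j' < 4" "m' \<in> M" using assms 1 by auto
    have "s = gx (gr k') (gx (gr k) s)" using k k' by auto
    then have g: "gr k = gr k'" using gx_fix by metis
    have "m * a k + m' * a k' = 0" using k k' by (auto simp: algebra_simps)
    then have "m * a k = - (m' * a k')" by (simp add: eq_neg_iff_add_eq_0)
    then have "m * a k = (-1) * (m' * a k')" by simp
    then have "k = k' \<and> j = j' \<and> m = (-1) * m'" using ext_eq[OF jm(1) jm'(1) jm(2) jm'(2) k(1) k'(1) g _ neg1] by blast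
    then show ?thesis using M2[OF jm'(2)] jm(2) by simp
  next
    case (2 t')
    then have "Q = (t' + 1, (False,False))" "fst P = t'" using assms by (auto simp: rel_def)
    then have "m * a k = 1" using k by (auto simp: algebra_simps)
    then have "a k = inverse m" using M_nz[OF jm(2)] by (simp add: field_simps)
    then have "a k \<in> C6" using C6_inv[OF M_C6[OF jm(2)]] by simp
    then show ?thesis using notC[OF jm(1) k(1)] by simp
  qed
next
  case (2 t)
  note i2 = 2
  have P: "P = (t + 1, (False,False))" "fst Q = t" using assms i2 by (auto simp: rel_def)
  show ?thesis
  proof (cases i' rule: idx_cases)
    case (1 j' t' s' m')
    obtain k' where k': "k' \<in> bb j'" "Q = (t',s')" "P = (m' * a k' + t', gx (gr k') s')" using assms 1 by (auto simp: rel_def)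
    have jm': "j' < 4" "m' \<in> M" using assms 1 by auto
    have "m' * a k' = 1" using k' P by (auto simp: algebra_simps)
    then have "a k' = inverse m'" using M_nz[OF jm'(2)] by (simp add: field_simps)
    then have "a k' \<in> C6" using C6_inv[OF M_C6[OF jm'(2)]] by simp
    then show ?thesis using notC[OF jm'(1) k'(1)] by simp
  next
    case (2 t')
    then have "Q = (t' + 1, (False,False))" "fst P = t'" using assms by (auto simp: rel_def)
    then have "t = t' + 1" "t' = t + 1" using P by auto
    then have "1 + 1 = (0::'a)" by (metis add.assoc add_cancel_left_right add.commute)
    then show ?thesis using two by (metis add_eq_0_iff)
  qed
qed

end


context L6
begin

definition ext where "ext i = insert (np i) (blk i)"

lemma pcA: assumes "P \<noteq> Q" shows "card {i\<in>Iset. P \<in> blk i \<and> Q \<in> blk i} = 1"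
proof -
  obtain i0 where i0: "i0 \<in> Iset" "P \<in> blk i0" "Q \<in> blk i0" using A_ex[OF assms] by blast
  have "{i\<in>Iset. P \<in> blk i \<and> Q \<in> blk i} = {i0}" using i0 A_un[OF assms] by blast
  then show ?thesis by simp
qed

lemma two_elems: assumes "i \<in> Iset" shows "\<exists>P Q. P \<in> blk i \<and> Q \<in> blk i \<and> P \<noteq> Q"
proof (rule ccontr)
  assume "\<not> ?thesis"
  then have "\<forall>P\<in>blk i. \<forall>Q\<in>blk i. P = Q" by blast
  moreover have "finite (blk i)" by simp
  ultimately have "card (blk i) \<le> Suc 0" using card_le_Suc0_iff_eq by blast
  then show False using C_card[OF assms] by simp
qed

lemma blk_inj: "inj_on blk Iset"
proof (rule inj_onI)
  fix i i' assume h: "i \<in> Iset" "i' \<in> Iset" "blk i = blk i'"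
  obtain P Q where "P \<in> blk i" "Q \<in> blk i" "P \<noteq> Q" using two_elems[OF h(1)] by blast
  then show "i = i'" using A_un[of P Q i i'] h by auto
qed

lemma pcD: "card {i\<in>Iset. rel i P Q \<or> rel i Q P} \<le> 1"
proof -
  have "finite {i\<in>Iset. rel i P Q \<or> rel i Q P}" using finI by simp
  moreover have "\<forall>i1\<in>{i\<in>Iset. rel i P Q \<or> rel i Q P}. \<forall>i2\<in>{i\<in>Iset. rel i P Q \<or> rel i Q P}. i1 = i2"
    using D1 D2 by blast
  ultimately have "card {i\<in>Iset. rel i P Q \<or> rel i Q P} \<le> Suc 0" using card_le_Suc0_iff_eq by blast
  then show ?thesis by simp
qed

lemma ext_count: assumes "P \<noteq> Q" shows "card {i\<in>Iset. P \<in> ext i \<and> Q \<in> ext i} \<le> 2"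
proof -
  have "{i\<in>Iset. P \<in> ext i \<and> Q \<in> ext i} \<subseteq> {i\<in>Iset. P \<in> blk i \<and> Q \<in> blk i} \<union> {i\<in>Iset. rel i P Q \<or> rel i Q P}"
    using assms by (auto simp: ext_def rel_def)
  then have "card {i\<in>Iset. P \<in> ext i \<and> Q \<in> ext i} \<le> card ({i\<in>Iset. P \<in> blk i \<and> Q \<in> blk i} \<union> {i\<in>Iset. rel i P Q \<or> rel i Q P})"
    using finI by (intro card_mono) auto
  also have "\<dots> \<le> card {i\<in>Iset. P \<in> blk i \<and> Q \<in> blk i} + card {i\<in>Iset. rel i P Q \<or> rel i Q P}"
    by (rule card_Un_le)
  also have "\<dots> \<le> 2" using pcA[OF assms] pcD by simp
  finally show ?thesis .
qed

lemma nested_main: "nested_bibd (UNIV :: ('a \<times> (bool \<times> bool)) set) (image_mset blk (mset_set Iset)) (4 * CARD('a))"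
proof -
  define B where "B = image_mset blk (mset_set Iset)"
  define \<phi> where "\<phi> A = np (the_inv_into Iset blk A)" for A
  have phi: "\<phi> (blk i) = np i" if "i \<in> Iset" for i
    using the_inv_into_f_f[OF blk_inj that] by (simp add: \<phi>_def)
  have cardU: "card (UNIV :: ('a \<times> (bool \<times> bool)) set) = 4 * CARD('a)" by simp
  have inB: "\<exists>i\<in>Iset. A = blk i" if "A \<in># B" for A using that finI by (auto simp: B_def)
  have bib: "bibd UNIV B (4 * CARD('a)) 4 1"
    unfolding bibd_def
  proof (intro conjI)
    show "\<forall>A\<in>#B. A \<subseteq> UNIV \<and> card A = 4" using inB C_card by auto
    show "\<forall>x\<in>UNIV. \<forall>y\<in>UNIV. x \<noteq> y \<longrightarrow> pair_count B x y = 1"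
      using pcA by (simp add: B_def pc_image[OF finI])
  qed (simp_all add: cardU)
  have img: "image_mset (\<lambda>A. insert (\<phi> A) A) B = image_mset ext (mset_set Iset)"
    unfolding B_def multiset.map_comp
    by (rule image_mset_cong) (simp add: phi finI ext_def)
  have par: "partial_bibd UNIV (image_mset (\<lambda>A. insert (\<phi> A) A) B) (4 * CARD('a)) 5 2"
    unfolding partial_bibd_def img
  proof (intro conjI)
    show "\<forall>A\<in>#image_mset ext (mset_set Iset). A \<subseteq> UNIV \<and> card A = 5"
    proof
      fix A assume "A \<in># image_mset ext (mset_set Iset)"
      then obtain i where "i \<in> Iset" "A = ext i" using finI by auto
      then show "A \<subseteq> UNIV \<and> card A = 5" using B_np C_card by (simp add: ext_def)
    qed
    show "\<forall>x\<in>UNIV. \<forall>y\<in>UNIV. x \<noteq> y \<longrightarrow> pair_count (image_mset ext (mset_set Iset)) x y \<le> 2"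
      using ext_count by (simp add: pc_image[OF finI])
  qed (simp_all add: cardU)
  have "\<forall>A\<in>#B. \<phi> A \<in> UNIV \<and> \<phi> A \<notin> A"
  proof
    fix A assume "A \<in># B"
    then obtain i where "i \<in> Iset" "A = blk i" using inB by blast
    then show "\<phi> A \<in> UNIV \<and> \<phi> A \<notin> A" using phi B_np by simp
  qed
  then have "bibd UNIV B (4 * CARD('a)) 4 1 \<and> (\<exists>\<phi>. (\<forall>A\<in>#B. \<phi> A \<in> UNIV \<and> \<phi> A \<notin> A) \<and>
      partial_bibd UNIV (image_mset (\<lambda>A. insert (\<phi> A) A) B) (4 * CARD('a)) 5 2)"
    using bib par by blast
  then show ?thesis unfolding nested_bibd_def B_def[symmetric] .
qed

end



lemma pc_transfer:
  assumes "inj_on f X" "\<forall>A\<in>#B. A \<subseteq> X" "x \<in> X" "y \<in> X"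
  shows "pair_count (image_mset ((`) f) B) (f x) (f y) = pair_count B x y"
proof -
  have "filter_mset (\<lambda>A. x \<in> A \<and> y \<in> A) B = filter_mset (\<lambda>A. f x \<in> f ` A \<and> f y \<in> f ` A) B"
    using assms by (intro filter_mset_cong) (auto simp: inj_on_image_mem_iff)
  then show ?thesis unfolding pair_count_def by (simp add: filter_mset_image_mset)
qed

lemma design_transfer:
  assumes bij: "bij_betw f X Y" and A: "\<forall>A\<in>#B. A \<subseteq> X \<and> card A = k"
    and R: "\<forall>x\<in>X. \<forall>y\<in>X. x \<noteq> y \<longrightarrow> R (pair_count B x y)"
  shows "(\<forall>A\<in>#image_mset ((`) f) B. A \<subseteq> Y \<and> card A = k) \<and>
         (\<forall>x\<in>Y. \<forall>y\<in>Y. x \<noteq> y \<longrightarrow> R (pair_count (image_mset ((`) f) B) x y))"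
proof -
  have inj: "inj_on f X" using bij by (rule bij_betw_imp_inj_on)
  have im: "f ` X = Y" using bij by (rule bij_betw_imp_surj_on)
  have 1: "A' \<subseteq> Y \<and> card A' = k" if hA: "A' \<in># image_mset ((`) f) B" for A'
  proof -
    obtain A where "A \<in># B" "A' = f ` A" using hA by (metis imageE multiset.set_map)
    then show ?thesis using A im inj by (auto simp: card_image inj_on_subset)
  qed
  have 2: "R (pair_count (image_mset ((`) f) B) x' y')" if hx: "x' \<in> Y" "y' \<in> Y" "x' \<noteq> y'" for x' y'
  proof -
    obtain x y where "x \<in> X" "y \<in> X" "x' = f x" "y' = f y" "x \<noteq> y" using im hx by auto
    then show ?thesis using pc_transfer[OF inj, of B x y] A R by auto
  qed
  show ?thesis using 1 2 by blast
qed

lemma nested_transfer: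
  assumes bij: "bij_betw f X Y" and N: "nested_bibd X B v"
  shows "nested_bibd Y (image_mset ((`) f) B) v"
proof -
  have inj: "inj_on f X" using bij by (rule bij_betw_imp_inj_on)
  have im: "f ` X = Y" using bij by (rule bij_betw_imp_surj_on)
  obtain \<phi> where phi: "\<forall>A\<in>#B. \<phi> A \<in> X \<and> \<phi> A \<notin> A"
    and par: "partial_bibd X (image_mset (\<lambda>A. insert (\<phi> A) A) B) v 5 2"
    using N unfolding nested_bibd_def by blast
  have bib: "bibd X B v 4 1" using N unfolding nested_bibd_def by blast
  have AX: "\<forall>A\<in>#B. A \<subseteq> X" using bib unfolding bibd_def by blast
  define \<psi> where "\<psi> A' = f (\<phi> (inv_into X f ` A'))" for A'
  have psi: "\<psi> (f ` A) = f (\<phi> A)" if "A \<in># B" for A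
    using AX that inj by (simp add: \<psi>_def)
  have fX: "finite X" "card X = v" using bib unfolding bibd_def by blast+
  have fin: "finite Y" "card Y = v"
    using fX bij_betw_finite[OF bij] bij_betw_same_card[OF bij] by simp_all
  have bA: "\<forall>A\<in>#B. A \<subseteq> X \<and> card A = 4" and bP: "\<forall>x\<in>X. \<forall>y\<in>X. x \<noteq> y \<longrightarrow> pair_count B x y = 1"
    using bib unfolding bibd_def by blast+
  have b1: "bibd Y (image_mset ((`) f) B) v 4 1"
  proof -
    have dt: "(\<forall>A\<in>#image_mset ((`) f) B. A \<subseteq> Y \<and> card A = 4) \<and>
      (\<forall>x\<in>Y. \<forall>y\<in>Y. x \<noteq> y \<longrightarrow> pair_count (image_mset ((`) f) B) x y = 1)"
      using design_transfer[OF bij bA, of "\<lambda>n. n = 1"] bP by blast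
    show ?thesis unfolding bibd_def using fin dt by blast
  qed
  have img: "image_mset (\<lambda>A. insert (\<psi> A) A) (image_mset ((`) f) B) =
      image_mset ((`) f) (image_mset (\<lambda>A. insert (\<phi> A) A) B)"
    unfolding multiset.map_comp by (rule image_mset_cong) (simp add: psi)
  have pA: "\<forall>A\<in>#image_mset (\<lambda>A. insert (\<phi> A) A) B. A \<subseteq> X \<and> card A = 5"
    and pP: "\<forall>x\<in>X. \<forall>y\<in>X. x \<noteq> y \<longrightarrow> pair_count (image_mset (\<lambda>A. insert (\<phi> A) A) B) x y \<le> 2"
    using par unfolding partial_bibd_def by blast+
  have p1: "partial_bibd Y (image_mset (\<lambda>A. insert (\<psi> A) A) (image_mset ((`) f) B)) v 5 2"
  proof -
    have dt: "(\<forall>A\<in>#image_mset ((`) f) (image_mset (\<lambda>A. insert (\<phi> A) A) B). A \<subseteq> Y \<and> card A = 5) \<and>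
      (\<forall>x\<in>Y. \<forall>y\<in>Y. x \<noteq> y \<longrightarrow> pair_count (image_mset ((`) f) (image_mset (\<lambda>A. insert (\<phi> A) A) B)) x y \<le> 2)"
      using design_transfer[OF bij pA, of "\<lambda>n. n \<le> 2"] pP by blast
    show ?thesis unfolding img partial_bibd_def using fin dt by blast
  qed
  have "\<forall>A\<in>#image_mset ((`) f) B. \<psi> A \<in> Y \<and> \<psi> A \<notin> A"
  proof
    fix A' assume "A' \<in># image_mset ((`) f) B"
    then obtain A where A: "A \<in># B" "A' = f ` A" by (metis imageE multiset.set_map)
    have pX: "\<phi> A \<in> X" "\<phi> A \<notin> A" "A \<subseteq> X" using phi AX A(1) by blast+
    have "f (\<phi> A) \<notin> f ` A" using inj_on_image_mem_iff[OF inj pX(1) pX(3)] pX(2) by simp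
    moreover have "f (\<phi> A) \<in> Y" using pX(1) im by blast
    ultimately show "\<psi> A' \<in> Y \<and> \<psi> A' \<notin> A'"
      using psi[OF A(1)] A(2) by simp
  qed
  note ps = this
  show ?thesis unfolding nested_bibd_def
  proof (rule conjI[OF b1], rule exI[of _ \<psi>], rule conjI)
    show "\<forall>A\<in>#image_mset ((`) f) B. \<psi> A \<in> Y \<and> \<psi> A \<notin> A" by (rule ps)
    show "partial_bibd Y (image_mset (\<lambda>A. insert (\<psi> A) A) (image_mset ((`) f) B)) v 5 2" by (rule p1)
  qed
qed



theorem mainTheorem17:
  fixes a :: "nat \<Rightarrow> 'a::{finite,field}" and n :: nat
  assumes q: "CARD('a) = 12 * n + 1"
    and nz: "\<forall>i \<in> {1..16}. a i \<noteq> 0"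
    and D00: "complete_rep6 [a 1 - a 2, a 5 - a 6, a 10 - a 11, a 10 - a 12, a 11 - a 12, a 15 - a 16]"
    and D01: "complete_rep6 [a 1 - a 3, a 2 - a 3, a 5 - a 7, a 6 - a 7, a 14 - a 15, a 14 - a 16]"
    and D10: "complete_rep6 [a 1 - a 4, a 2 - a 4, a 5 - a 8, a 6 - a 8, a 13 - a 15, a 13 - a 16]"
    and D11: "complete_rep6 [a 3 - a 4, a 7 - a 8, a 9 - a 10, a 9 - a 11, a 9 - a 12, a 13 - a 14]"
    and U00: "partial_rep6 [a 1, a 2, a 5, a 6, a 9]"
    and U01: "partial_rep6 [a 3, a 7, a 13]"
    and U10: "partial_rep6 [a 4, a 8, a 14]"
    and U11: "partial_rep6 [a 10, a 11, a 12, a 15, a 16]"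
  shows "\<exists>(X :: nat set) (B :: nat set multiset). nested_bibd X B (4 * CARD('a))"
proof -
  have ff: "(-1::'a) \<in> C6" "(1::'a) \<noteq> -1"
    "\<And>L d. complete_rep6 (L::'a list) \<Longrightarrow> d \<noteq> 0 \<Longrightarrow> \<exists>e<6. coset6 d = coset6 (L!e)"
    using field_facts[OF q] by blast+
  obtain M :: "'a set" where M: "M \<subseteq> C6" "\<forall>c\<in>C6. c \<in> M \<or> -c \<in> M" "\<forall>c\<in>M. -c \<notin> M"
    using half_exists[OF ff(1,2)] by blast
  interpret L6 a M
  proof (unfold_locales)
    show "\<And>i. i \<in> {1..16} \<Longrightarrow> a i \<noteq> 0" using nz by blast
    show "complete_rep6 (map (\<lambda>(k,l). a k - a l) (PL c))" for c
      using cases4[of c] D00 D01 D10 D11 by (auto simp: PL_def)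
    show "partial_rep6 (map a (UL c))" for c
      using cases4[of c] U00 U01 U10 U11 by (auto simp: UL_vals)
  qed (use ff M in auto)
  have N: "nested_bibd (UNIV :: ('a \<times> (bool \<times> bool)) set) (image_mset blk (mset_set Iset)) (4 * CARD('a))"
    by (rule nested_main)
  obtain h where h: "bij_betw h (UNIV :: ('a \<times> (bool \<times> bool)) set) {0..<card (UNIV :: ('a \<times> (bool \<times> bool)) set)}"
    using ex_bij_betw_finite_nat[of "UNIV :: ('a \<times> (bool \<times> bool)) set"] by auto
  show ?thesis using nested_transfer[OF h N] by blast
qed


end
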